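(* Let $n\ge 1$, let $\delta>0$, let $\hat{\mathbf{B}}_t\in\mathbb{R}^{n\times n}$ be a symmetric positive definite matrix, and let $\mathbf{v}_t,\hat{\mathbf{r}}_t\in\mathbb{R}^n$. Consider the semidefinite program \[ \hat{\mathbf{B}}_{t+1}=\operatorname*{argmin}_{\mathbf{Z}}\ \operatorname{tr}\!\left[\hat{\mathbf{B}}_t^{-1}(\mathbf{Z}-\delta\mathbf{I})\right]-\log\det\!\left[\hat{\mathbf{B}}_t^{-1}(\mathbf{Z}-\delta\mathbf{I})\right]-n \quad\text{s.t.}\quad \mathbf{Z}\mathbf{v}_t=\hat{\mathbf{r}}_t,\ \ \mathbf{Z}\succeq\mathbf{0}, \] where $\mathbf{Z}$ ranges over symmetric $n\times n$ matrices (with the objective defined where $\mathbf{Z}-\delta\mathbf{I}\succ\mathbf{0}$). Define the corrected gradient variation $\tilde{\mathbf{r}}_t:=\hat{\mathbf{r}}_t-\delta\mathbf{v}_t$. If $\tilde{\mathbf{r}}_t^T\mathbf{v}_t=(\hat{\mathbf{r}}_t-\delta\mathbf{v}_t)^T\mathbf{v}_t>0$, then the solution $\hat{\mathbf{B}}_{t+1}$ of this program can be written as \[ \hat{\mathbf{B}}_{t+1}=\hat{\mathbf{B}}_t+\frac{\tilde{\mathbf{r}}_t\tilde{\mathbf{r}}_t^T}{\mathbf{v}_t^T\tilde{\mathbf{r}}_t}-\frac{\hat{\mathbf{B}}_t\mathbf{v}_t\mathbf{v}_t^T\hat{\mathbf{B}}_t}{\mathbf{v}_t^T\hat{\mathbf{B}}_t\mathbf{v}_t}+\delta\mathbf{I}.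 \]
   Context: $\mathbf{I}$ denotes the $n\times n$ identity matrix; $\succeq$ and $\succ$ denote the positive semidefinite and positive definite orders on symmetric matrices. *)

theory Defs
  imports "HOL-Analysis.Analysis"
begin

definition sym_mat :: "real^'n^'n \<Rightarrow> bool" where
  "sym_mat A \<longleftrightarrow> transpose A = A"

definition psd_mat :: "real^'n^'n \<Rightarrow> bool" where
  "psd_mat A \<longleftrightarrow> sym_mat A \<and> (\<forall>x. 0 \<le> x \<bullet> (A *v x))"

definition pd_mat :: "real^'n^'n \<Rightarrow> bool" where
  "pd_mat A \<longleftrightarrow> sym_mat A \<and> (\<forall>x. x \<noteq> 0 \<longrightarrow> 0 < x \<bullet> (A *v x))"

definition outer :: "real^'n \<Rightarrow> real^'n \<Rightarrow> real^'n^'n" where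
  "outer a b = (\<chi> i j. a $ i * b $ j)"

definition sdp_obj :: "real^'n^'n \<Rightarrow> real \<Rightarrow> real^'n^'n \<Rightarrow> real" where
  "sdp_obj B \<delta> Z =
     trace (matrix_inv B ** (Z - \<delta> *\<^sub>R mat 1))
     - ln (det (matrix_inv B ** (Z - \<delta> *\<^sub>R mat 1)))
     - real CARD('n)"

(* feasible set, restricted to the domain where the objective is defined *)
definition sdp_feasible :: "real \<Rightarrow> real^'n \<Rightarrow> real^'n \<Rightarrow> (real^'n^'n) set" where
  "sdp_feasible \<delta> v r = {Z. sym_mat Z \<and> Z *v v = r \<and> psd_mat Z \<and> pd_mat (Z - \<delta> *\<^sub>R mat 1)}"

definition is_sdp_solution :: "real^'n^'n \<Rightarrow> real \<Rightarrow> real^'n \<Rightarrow> real^'n \<Rightarrow> real^'n^'n \<Rightarrow> bool" where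
  "is_sdp_solution B \<delta> v r Z \<longleftrightarrow>
     Z \<in> sdp_feasible \<delta> v r \<and>
     (\<forall>W \<in> sdp_feasible \<delta> v r. sdp_obj B \<delta> Z \<le> sdp_obj B \<delta> W) \<and>
     (\<forall>W \<in> sdp_feasible \<delta> v r. sdp_obj B \<delta> W = sdp_obj B \<delta> Z \<longrightarrow> W = Z)"

end

theory Submission
  imports Defs
begin


lemma outer_nth [simp]: "outer a b $ i $ j = a $ i * b $ j"
  by (simp add: outer_def)

lemma outer_mulv: "outer a b *v x = (b \<bullet> x) *\<^sub>R a"
  by (simp add: vec_eq_iff matrix_vector_mult_def inner_vec_def sum_distrib_left mult_ac)

lemma transpose_outer: "transpose (outer a b) = outer b a"
  by (simp add: vec_eq_iff transpose_def)

lemma trace_outer_mult: "trace (outer a b ** M) = b \<bullet> (M *v (a::real^'n))"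
  apply (simp add: trace_def matrix_matrix_mult_def inner_vec_def matrix_vector_mult_def
      sum_distrib_left)
  apply (subst sum.swap)
  apply (simp add: mult_ac)
  done

lemma inner_mulv_transpose: "x \<bullet> (C *v w) = (transpose C *v x) \<bullet> (w::real^'n)"
  by (simp add: dot_lmul_matrix)

lemma sym_mat_transpose: "sym_mat A \<Longrightarrow> transpose A = A"
  by (simp add: sym_mat_def)

lemma mulv_axis [simp]: "(K *v axis i (1::real)) $ j = K $ j $ i"
  by (simp add: matrix_vector_mult_def axis_def if_distrib cong: if_cong)

lemma pd_diag_pos: "pd_mat K \<Longrightarrow> 0 < K $ i $ i"
proof -
  assume "pd_mat K"
  then have "0 < axis i 1 \<bullet> (K *v axis i (1::real))"
    unfolding pd_mat_def by (metis axis_eq_0_iff one_neq_zero)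
  then show ?thesis
    by (simp add: inner_axis')
qed

lemma pd_congr:
  fixes K C :: "real^'n^'n"
  assumes "pd_mat K" "invertible C"
  shows "pd_mat (C ** K ** transpose C)"
  unfolding pd_mat_def sym_mat_def
proof (intro conjI allI impI)
  show "transpose (C ** K ** transpose C) = C ** K ** transpose C"
    using assms(1) by (simp add: matrix_transpose_mul sym_mat_def pd_mat_def matrix_mul_assoc)
  fix x :: "real^'n" assume "x \<noteq> 0"
  have inj: "inj ((*v) (transpose C))"
    by (simp add: assms(2) inj_matrix_vector_mult transpose_invertible)
  then have "transpose C *v x \<noteq> 0"
    using \<open>x \<noteq> 0\<close> by (metis injD matrix_vector_mult_0_right)
  then have "0 < (transpose C *v x) \<bullet> (K *v (transpose C *v x))"
    using assms(1) unfolding pd_mat_def by blast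
  also have "\<dots> = x \<bullet> ((C ** K ** transpose C) *v x)"
    by (simp add: inner_mulv_transpose matrix_vector_mul_assoc[symmetric])
  finally show "0 < x \<bullet> ((C ** K ** transpose C) *v x)" .
qed




definition elimc :: "real^'n^'n \<Rightarrow> 'n \<Rightarrow> real^'n" where
  "elimc K a = (\<chi> i. if i = a then 0 else K$i$a / K$a$a)"

definition elimE :: "real^'n^'n \<Rightarrow> 'n \<Rightarrow> real^'n^'n" where
  "elimE K a = mat 1 - outer (elimc K a) (axis a 1)"

lemma transpose_diff: "transpose (A - B) = transpose A - transpose (B::real^'n^'n)"
  by (simp add: vec_eq_iff transpose_def)

lemma mat_entry_mulv: "X $ i $ j = (X *v axis j (1::real)) $ i"
  by simp

lemma elim_entries:
  fixes K :: "real^'n^'n"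
  assumes "sym_mat K" "K$a$a \<noteq> 0"
  shows "(elimE K a ** K ** transpose (elimE K a)) $ i $ j =
    (if i = a \<and> j = a then K$a$a else if i = a \<or> j = a then 0 else K$i$j - K$i$a * K$a$j / K$a$a)"
proof -
  let ?c = "elimc K a"
  have symK: "K$p$q = K$q$p" for p q
    using assms(1) unfolding sym_mat_def by (metis transpose_def vec_lambda_beta)
  have TE: "transpose (elimE K a) *v w = w - (?c \<bullet> w) *\<^sub>R axis a 1" for w
    by (simp del: transpose_matrix_vector add: elimE_def transpose_diff transpose_outer outer_mulv algebra_simps)
  have Ev: "elimE K a *v w = w - (w $ a) *\<^sub>R ?c" for w
    by (simp add: elimE_def outer_mulv algebra_simps inner_axis')
  have "(elimE K a ** K ** transpose (elimE K a)) $ i $ j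
      = (elimE K a *v (K *v (transpose (elimE K a) *v axis j 1))) $ i"
    by (subst mat_entry_mulv) (simp only: matrix_vector_mul_assoc matrix_mul_assoc)
  also have "\<dots> = K$i$j - ?c$j * K$i$a - (K$a$j - ?c$j * K$a$a) * ?c$i"
    by (simp del: transpose_matrix_vector add: TE Ev algebra_simps inner_axis)
  also have "\<dots> = (if i = a \<and> j = a then K$a$a else if i = a \<or> j = a then 0 else K$i$j - K$i$a * K$a$j / K$a$a)"
    using assms(2) by (auto simp: elimc_def field_simps symK[of j a])
  finally show ?thesis .
qed

lemma tA: "(\<Sum>j\<in>UNIV-{a}. f j *s row j (mat 1::real^'n^'n)) $ k = (\<Sum>j\<in>UNIV-{a}. f j * (if j = k then 1 else 0))"
  by (simp add: row_def mat_def)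
lemma tB: fixes a k :: "'n::finite" shows "(\<Sum>j\<in>UNIV-{a}. f j * (if j = k then 1 else (0::real))) = (if k = a then 0 else f k)"
proof -
  have "(\<Sum>j\<in>UNIV-{a}. f j * (if j = k then 1 else (0::real))) = (\<Sum>j\<in>UNIV-{a}. if j = k then f k else 0)"
    by (rule sum.cong) auto
  also have "\<dots> = (if k \<in> UNIV-{a} then f k else 0)"
    by (rule sum.delta) simp
  finally show ?thesis by auto
qed
lemma det_elimE: fixes K :: "real^'n^'n" shows "det (elimE K a) = 1"
proof -
  let ?c = "elimc K a"
  have ca: "?c $ a = 0" by (simp add: elimc_def)
  let ?x = "- ?c"
  have xeq: "?x = (\<Sum>j\<in>UNIV - {a}. (- ?c $ j) *s row j (mat 1::real^'n^'n))"
  proof (subst vec_eq_iff, intro allI)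
    fix k
    show "?x $ k = (\<Sum>j\<in>UNIV - {a}. (- ?c $ j) *s row j (mat 1::real^'n^'n)) $ k"
      unfolding tA tB using ca by (cases "k = a") simp_all
  qed
  have "?x \<in> vec.span {row j (mat 1::real^'n^'n) |j. j \<noteq> a}"
    unfolding xeq
    by (intro vec.span_sum vec.span_scale vec.span_base) blast
  then have "det ((\<chi> k. if k = a then row a (mat 1::real^'n^'n) + ?x else row k (mat 1)) :: real^'n^'n) = det (mat 1::real^'n^'n)"
    by (rule det_row_span)
  moreover have "((\<chi> k. if k = a then row a (mat 1::real^'n^'n) + ?x else row k (mat 1)) :: real^'n^'n) = transpose (elimE K a)"
    unfolding vec_eq_iff by (simp add: row_def mat_def elimE_def transpose_def axis_def)
  ultimately show ?thesis by simp
qed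



lemma pd_sym_entry: "pd_mat K \<Longrightarrow> K $ p $ q = K $ q $ p"
  unfolding pd_mat_def sym_mat_def by (metis transpose_def vec_lambda_beta)

lemma elim_induct:
  fixes K :: "real^'n^'n"
  assumes pdK: "pd_mat K" and fin: "finite S"
  shows "\<exists>C. det C = 1 \<and> pd_mat (C ** K ** transpose C)
     \<and> (\<forall>a\<in>S. \<forall>i. i \<noteq> a \<longrightarrow> (C ** K ** transpose C)$i$a = 0)
     \<and> (\<forall>i. (C ** K ** transpose C)$i$i \<le> K$i$i)
     \<and> ((\<forall>i. (C ** K ** transpose C)$i$i = K$i$i) \<longrightarrow> C ** K ** transpose C = K)"
  using fin
proof (induction S rule: finite_induct)
  case empty
  show ?case
    by (rule exI[of _ "mat 1"]) (simp add: pdK)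
next
  case (insert a S)
  from insert.IH obtain C where Call: "det C = 1 \<and> pd_mat (C ** K ** transpose C)
     \<and> (\<forall>b\<in>S. \<forall>i. i \<noteq> b \<longrightarrow> (C ** K ** transpose C)$i$b = 0)
     \<and> (\<forall>i. (C ** K ** transpose C)$i$i \<le> K$i$i)
     \<and> ((\<forall>i. (C ** K ** transpose C)$i$i = K$i$i) \<longrightarrow> C ** K ** transpose C = K)" ..
  note C = conjunct1[OF Call] conjunct1[OF conjunct2[OF Call]] conjunct1[OF conjunct2[OF conjunct2[OF Call]]]
    conjunct1[OF conjunct2[OF conjunct2[OF conjunct2[OF Call]]]] conjunct2[OF conjunct2[OF conjunct2[OF conjunct2[OF Call]]]]
  define K' where "K' = C ** K ** transpose C"
  define E where "E = elimE K' a"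
  have pdK': "pd_mat K'" using C(2) K'_def by simp
  have symK': "K'$p$q = K'$q$p" for p q using pdK' by (rule pd_sym_entry)
  have Kaa: "0 < K'$a$a" using pdK' by (rule pd_diag_pos)
  have ent: "(E ** K' ** transpose E) $ i $ j =
    (if i = a \<and> j = a then K'$a$a else if i = a \<or> j = a then 0 else K'$i$j - K'$i$a * K'$a$j / K'$a$a)" for i j
    unfolding E_def using pdK' Kaa by (intro elim_entries) (auto simp: pd_mat_def)
  have eq: "(E ** C) ** K ** transpose (E ** C) = E ** K' ** transpose E"
    by (simp add: K'_def matrix_transpose_mul matrix_mul_assoc)
  have detE: "det E = 1" unfolding E_def by (rule det_elimE)
  have invE: "invertible E" using detE by (simp add: invertible_det_nz)
  have sq: "0 \<le> K'$i$a * K'$a$i / K'$a$a" for i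
    using Kaa by (simp add: symK'[of a i])
  have diag: "(E ** K' ** transpose E) $ i $ i \<le> K'$i$i" for i
    using sq[of i] by (simp add: ent symK'[of a i])
  show ?case
  proof (rule exI[of _ "E ** C"], unfold eq, intro conjI)
    show "det (E ** C) = 1" by (simp add: det_mul detE C(1))
    show "pd_mat (E ** K' ** transpose E)" using pdK' invE by (rule pd_congr)
    show "\<forall>b\<in>insert a S. \<forall>i. i \<noteq> b \<longrightarrow> (E ** K' ** transpose E)$i$b = 0"
    proof (intro ballI allI impI)
      fix b i assume b: "b \<in> insert a S" and ib: "i \<noteq> b"
      show "(E ** K' ** transpose E)$i$b = 0"
      proof (cases "b = a")
        case True then show ?thesis using ib by (simp add: ent)
      next
        case False
        then have "b \<in> S" using b by simp
        then have "K'$i$b = 0" "K'$a$b = 0"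
          using C(3) ib False unfolding K'_def by auto
        then show ?thesis using False by (simp add: ent)
      qed
    qed
    show "\<forall>i. (E ** K' ** transpose E)$i$i \<le> K$i$i"
      using diag C(4) unfolding K'_def by (meson order.trans)
    show "(\<forall>i. (E ** K' ** transpose E)$i$i = K$i$i) \<longrightarrow> E ** K' ** transpose E = K"
    proof
      assume all: "\<forall>i. (E ** K' ** transpose E)$i$i = K$i$i"
      have d: "K'$i$i = K$i$i" for i
        using all diag[of i] C(4) unfolding K'_def by (metis order_antisym)
      then have K'K: "K' = K" using C(5) unfolding K'_def by blast
      have z: "K'$i$a = 0" if "i \<noteq> a" for i
      proof -
        have "(E ** K' ** transpose E) $ i $ i = K'$i$i" using all d by simp
        then have "K'$i$a * K'$a$i / K'$a$a = 0" using that by (simp add: ent)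
        then show ?thesis using Kaa by (simp add: symK'[of a i])
      qed
      have "E ** K' ** transpose E = K'"
        unfolding vec_eq_iff
      proof (intro allI)
        fix i j
        show "(E ** K' ** transpose E) $ i $ j = K' $ i $ j"
          using z[of i] z[of j] by (auto simp: ent symK'[of a j])
      qed
      then show "E ** K' ** transpose E = K" using K'K by simp
    qed
  qed
qed




lemma pd_diag_factor:
  fixes K :: "real^'n^'n"
  assumes "pd_mat K"
  shows "\<exists>C. det C = 1 \<and> pd_mat (C ** K ** transpose C)
     \<and> (\<forall>i j. i \<noteq> j \<longrightarrow> (C ** K ** transpose C)$i$j = 0)
     \<and> (\<forall>i. (C ** K ** transpose C)$i$i \<le> K$i$i)
     \<and> ((\<forall>i. (C ** K ** transpose C)$i$i = K$i$i) \<longrightarrow> C ** K ** transpose C = K)"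
proof -
  from elim_induct[OF assms finite_class.finite_UNIV] obtain C where Call: "det C = 1 \<and> pd_mat (C ** K ** transpose C)
     \<and> (\<forall>a\<in>UNIV. \<forall>i. i \<noteq> a \<longrightarrow> (C ** K ** transpose C)$i$a = 0)
     \<and> (\<forall>i. (C ** K ** transpose C)$i$i \<le> K$i$i)
     \<and> ((\<forall>i. (C ** K ** transpose C)$i$i = K$i$i) \<longrightarrow> C ** K ** transpose C = K)" ..
  then show ?thesis by (intro exI[of _ C]) simp
qed

lemma pd_diag_factorE:
  fixes K :: "real^'n^'n"
  assumes "pd_mat K"
  obtains C where "det C = 1" "pd_mat (C ** K ** transpose C)"
     "\<forall>i j. i \<noteq> j \<longrightarrow> (C ** K ** transpose C)$i$j = 0"
     "\<forall>i. (C ** K ** transpose C)$i$i \<le> K$i$i"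
     "(\<forall>i. (C ** K ** transpose C)$i$i = K$i$i) \<longrightarrow> C ** K ** transpose C = K"
proof -
  from pd_diag_factor[OF assms] obtain C where Call: "det C = 1 \<and> pd_mat (C ** K ** transpose C)
     \<and> (\<forall>i j. i \<noteq> j \<longrightarrow> (C ** K ** transpose C)$i$j = 0)
     \<and> (\<forall>i. (C ** K ** transpose C)$i$i \<le> K$i$i)
     \<and> ((\<forall>i. (C ** K ** transpose C)$i$i = K$i$i) \<longrightarrow> C ** K ** transpose C = K)" ..
  show thesis
    apply (rule that[of C])
    using Call apply simp_all
    done
qed

lemma matrix_inv_props:
  fixes C :: "real^'n^'n"
  assumes "invertible C"
  shows "matrix_inv C ** C = mat 1" "C ** matrix_inv C = mat 1"
proof -
  have "\<exists>A'. C ** A' = mat 1 \<and> A' ** C = mat 1" using assms unfolding invertible_def by blast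
  then have "C ** matrix_inv C = mat 1 \<and> matrix_inv C ** C = mat 1"
    unfolding matrix_inv_def by (rule someI_ex)
  then show "matrix_inv C ** C = mat 1" "C ** matrix_inv C = mat 1" by auto
qed

lemma det_pd_pos:
  fixes K :: "real^'n^'n"
  assumes "pd_mat K"
  shows "0 < det K"
proof -
  obtain C where C: "det C = 1" "pd_mat (C ** K ** transpose C)"
     "\<forall>i j. i \<noteq> j \<longrightarrow> (C ** K ** transpose C)$i$j = 0"
    using pd_diag_factorE[OF assms] by metis
  let ?D = "C ** K ** transpose C"
  have "det ?D = det K" by (simp add: det_mul C(1))
  moreover have "det ?D = (\<Prod>i\<in>UNIV. ?D$i$i)"
    using C(3) by (intro det_diagonal) blast
  moreover have "0 < (\<Prod>i\<in>UNIV. ?D$i$i)"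
    using C(2) by (intro prod_pos pd_diag_pos)
  ultimately show ?thesis by simp
qed

lemma ln_det_le:
  fixes K :: "real^'n^'n"
  assumes "pd_mat K"
  shows "ln (det K) \<le> trace K - real CARD('n)"
    and "ln (det K) = trace K - real CARD('n) \<Longrightarrow> K = mat 1"
proof -
  obtain C where C: "det C = 1" "pd_mat (C ** K ** transpose C)"
     "\<forall>i j. i \<noteq> j \<longrightarrow> (C ** K ** transpose C)$i$j = 0"
     "\<forall>i. (C ** K ** transpose C)$i$i \<le> K$i$i"
     "(\<forall>i. (C ** K ** transpose C)$i$i = K$i$i) \<longrightarrow> C ** K ** transpose C = K"
    using pd_diag_factorE[OF assms] by metis
  define D where "D = C ** K ** transpose C"
  have Dpos: "0 < D$i$i" for i using C(2) D_def pd_diag_pos by blast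
  have "det D = det K" by (simp add: D_def det_mul C(1))
  moreover have "det D = (\<Prod>i\<in>UNIV. D$i$i)"
    using C(3) D_def by (intro det_diagonal) blast
  moreover have "ln (\<Prod>i\<in>UNIV. D$i$i) = (\<Sum>i\<in>UNIV. ln (D$i$i))"
    by (rule ln_prod) (simp_all add: Dpos[THEN less_imp_neq, THEN not_sym])
  ultimately have lndet: "ln (det K) = (\<Sum>i\<in>UNIV. ln (D$i$i))"
    by simp
  have tr: "trace K - real CARD('n) = (\<Sum>i\<in>UNIV. K$i$i - 1)"
    by (simp add: trace_def sum_subtractf)
  have trm: "0 \<le> K$i$i - 1 - ln (D$i$i)" for i
  proof -
    have "D$i$i \<le> K$i$i" using C(4) D_def by blast
    then show ?thesis using ln_le_minus_one[OF Dpos[of i]] by linarith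
  qed
  have diff: "trace K - real CARD('n) - ln (det K) = (\<Sum>i\<in>UNIV. K$i$i - 1 - ln (D$i$i))"
    unfolding lndet tr by (simp add: sum_subtractf)
  have "0 \<le> (\<Sum>i\<in>UNIV. K$i$i - 1 - ln (D$i$i))"
    using trm by (intro sum_nonneg) auto
  then show "ln (det K) \<le> trace K - real CARD('n)" using diff by simp
  assume eq: "ln (det K) = trace K - real CARD('n)"
  then have "(\<Sum>i\<in>UNIV. K$i$i - 1 - ln (D$i$i)) = 0" using diff by simp
  then have z: "K$i$i - 1 - ln (D$i$i) = 0" for i
    using trm by (subst (asm) sum_nonneg_eq_0_iff) auto
  have DK: "D$i$i = K$i$i" and D1: "D$i$i = 1" for i
  proof -
    have a: "ln (D$i$i) \<le> D$i$i - 1" using ln_le_minus_one[OF Dpos[of i]] .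
    have b: "D$i$i \<le> K$i$i" using C(4) D_def by blast
    from z[of i] a b have "ln (D$i$i) = D$i$i - 1" "D$i$i = K$i$i" by linarith+
    then show "D$i$i = K$i$i" "D$i$i = 1" using ln_eq_minus_one[OF Dpos[of i]] by auto
  qed
  have "D = K" using C(5) DK D_def by blast
  moreover have "D = mat 1"
    using C(3) D1 D_def unfolding vec_eq_iff mat_def by auto
  ultimately show "K = mat 1" by simp
qed

lemma cholesky:
  fixes K :: "real^'n^'n"
  assumes "pd_mat K"
  shows "\<exists>R::real^'n^'n. invertible R \<and> K = R ** transpose R"
proof -
  obtain C where C: "det C = 1" "pd_mat (C ** K ** transpose C)"
     "\<forall>i j. i \<noteq> j \<longrightarrow> (C ** K ** transpose C)$i$j = 0"
    using pd_diag_factorE[OF assms] by metis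
  define D where "D = C ** K ** transpose C"
  have Dpos: "0 < D$i$i" for i using C(2) D_def pd_diag_pos by blast
  define S :: "real^'n^'n" where "S = (\<chi> i j. if i = j then sqrt (D$i$i) else 0)"
  define Ci where "Ci = matrix_inv C"
  have invC: "invertible C" using C(1) by (simp add: invertible_det_nz)
  have CiC: "Ci ** C = mat 1" "C ** Ci = mat 1" using matrix_inv_props[OF invC] Ci_def by auto
  have invCi: "invertible Ci" using CiC unfolding invertible_def by blast
  have SS: "S ** transpose S = D"
  proof -
    have "(S ** transpose S) $ i $ j = D $ i $ j" for i j
    proof (cases "i = j")
      case True
      have "(S ** transpose S) $ i $ j = (\<Sum>k\<in>UNIV. (if i = k then sqrt (D$i$i) else 0) * (if j = k then sqrt (D$j$j) else 0))"
        by (simp add: matrix_matrix_mult_def transpose_def S_def)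
      also have "\<dots> = (\<Sum>k\<in>UNIV. if k = i then D$i$i else 0)"
        using True Dpos[of i] by (intro sum.cong) auto
      also have "\<dots> = D$i$i" by simp
      finally show ?thesis using True by simp
    next
      case False
      have "(S ** transpose S) $ i $ j = (\<Sum>k\<in>UNIV. (if i = k then sqrt (D$i$i) else 0) * (if j = k then sqrt (D$j$j) else 0))"
        by (simp add: matrix_matrix_mult_def transpose_def S_def)
      also have "\<dots> = 0"
        using False by (intro sum.neutral) auto
      finally have "(S ** transpose S) $ i $ j = 0" .
      then show ?thesis using False C(3) D_def by simp
    qed
    then show ?thesis by (simp add: vec_eq_iff)
  qed
  have detS: "det S = (\<Prod>i\<in>UNIV. S$i$i)"
    by (rule det_diagonal) (simp add: S_def)
  have "0 < (\<Prod>i\<in>UNIV. S$i$i)"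
    using Dpos by (intro prod_pos) (simp add: S_def)
  then have invS: "invertible S" unfolding invertible_det_nz detS by linarith
  have "Ci ** D ** transpose Ci = (Ci ** C) ** K ** (transpose (Ci ** C))"
    by (simp add: D_def matrix_transpose_mul matrix_mul_assoc)
  also have "\<dots> = K" using CiC by simp
  finally have KD: "K = Ci ** D ** transpose Ci" by simp
  show ?thesis
  proof (rule exI[of _ "Ci ** S"], intro conjI)
    show "invertible (Ci ** S)" using invCi invS by (rule invertible_mult)
    show "K = (Ci ** S) ** transpose (Ci ** S)"
      unfolding KD SS[symmetric] by (simp add: matrix_transpose_mul matrix_mul_assoc)
  qed
qed




lemma key_ineq:
  fixes P Y :: "real^'n^'n"
  assumes pdP: "pd_mat P" and pdY: "pd_mat Y"
  shows "ln (det (P ** Y)) \<le> trace (P ** Y) - real CARD('n)"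
    and "ln (det (P ** Y)) = trace (P ** Y) - real CARD('n) \<Longrightarrow> P ** Y = mat 1"
proof -
  obtain R :: "real^'n^'n" where R: "invertible R" "Y = R ** transpose R"
    using cholesky[OF pdY] by blast
  define Kk where "Kk = transpose R ** P ** R"
  have "pd_mat (transpose R ** P ** transpose (transpose R))"
    using pdP transpose_invertible[OF R(1)] by (rule pd_congr)
  then have pdK: "pd_mat Kk" by (simp add: Kk_def)
  have detK: "det Kk = det (P ** Y)"
    by (simp add: Kk_def R(2) det_mul)
  have trK: "trace Kk = trace (P ** Y)"
  proof -
    have "trace Kk = trace (transpose R ** (P ** R))" by (simp add: Kk_def matrix_mul_assoc)
    also have "\<dots> = trace ((P ** R) ** transpose R)" by (rule trace_mul_sym)
    also have "\<dots> = trace (P ** Y)" by (simp add: R(2) matrix_mul_assoc)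
    finally show ?thesis .
  qed
  show "ln (det (P ** Y)) \<le> trace (P ** Y) - real CARD('n)"
    using ln_det_le(1)[OF pdK] detK trK by simp
  assume "ln (det (P ** Y)) = trace (P ** Y) - real CARD('n)"
  then have "Kk = mat 1" using ln_det_le(2)[OF pdK] detK trK by simp
  then have "transpose R ** (P ** R) = mat 1" by (simp add: Kk_def matrix_mul_assoc)
  then have "(P ** R) ** transpose R = mat 1" by (simp add: matrix_left_right_inverse)
  then show "P ** Y = mat 1" by (simp add: R(2) matrix_mul_assoc)
qed

lemma transpose_add: "transpose (A + B) = transpose A + transpose (B::real^'n^'n)"
  by (simp add: vec_eq_iff transpose_def)

lemma transpose_scaleR: "transpose (c *\<^sub>R A) = c *\<^sub>R transpose (A::real^'n^'n)"
  by (simp add: vec_eq_iff transpose_def)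

lemma mat_add_mult: "(A + B) ** M = A ** M + B ** (M::real^'n^'n)"
  by (simp add: matrix_matrix_mult_def vec_eq_iff sum.distrib algebra_simps)

lemma mat_diff_mult: "(A - B) ** M = A ** M - B ** (M::real^'n^'n)"
  by (simp add: matrix_matrix_mult_def vec_eq_iff sum_subtractf algebra_simps)

lemma mat_scale_mult: "(c *\<^sub>R A) ** M = c *\<^sub>R (A ** (M::real^'n^'n))"
  by (simp add: scalar_matrix_assoc)

lemma trace_scaleR: "trace (c *\<^sub>R (A::real^'n^'n)) = c * trace A"
  by (simp add: trace_def sum_distrib_left)

lemma scaleR_mulv: "(c *\<^sub>R A) *v x = c *\<^sub>R (A *v (x::real^'n))"
  by (simp add: scaleR_matrix_vector_assoc)

lemma sym_inner: "transpose M = M \<Longrightarrow> v \<bullet> (M *v w) = (M *v v) \<bullet> (w::real^'n)"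
  by (metis inner_mulv_transpose)




theorem lemma1:
  fixes B :: "real^'n^'n" and v r :: "real^'n" and \<delta> :: real
  assumes "\<delta> > 0" and "pd_mat B"
    and "(r - \<delta> *\<^sub>R v) \<bullet> v > 0"
  shows "is_sdp_solution B \<delta> v r
           (B + (1 / (v \<bullet> (r - \<delta> *\<^sub>R v))) *\<^sub>R outer (r - \<delta> *\<^sub>R v) (r - \<delta> *\<^sub>R v)
              - (1 / (v \<bullet> (B *v v))) *\<^sub>R outer (B *v v) (B *v v)
              + \<delta> *\<^sub>R mat 1)"
proof -
  define y where "y = r - \<delta> *\<^sub>R v"
  define q where "q = v \<bullet> y"
  define Bv where "Bv = B *v v"
  define c where "c = v \<bullet> Bv"
  define H where "H = matrix_inv B"
  define Hy where "Hy = H *v y"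
  define h where "h = Hy \<bullet> y"
  define Ys where "Ys = B + (1/q) *\<^sub>R outer y y - (1/c) *\<^sub>R outer Bv Bv"
  define kk where "kk = (1/q)^2 * h + 1/q"
  define Hs where "Hs = H - (1/q) *\<^sub>R outer v Hy - (1/q) *\<^sub>R outer Hy v + kk *\<^sub>R outer v v"
  define Zs where "Zs = Ys + \<delta> *\<^sub>R mat 1"
  have goal_eq: "B + (1 / (v \<bullet> (r - \<delta> *\<^sub>R v))) *\<^sub>R outer (r - \<delta> *\<^sub>R v) (r - \<delta> *\<^sub>R v)
              - (1 / (v \<bullet> (B *v v))) *\<^sub>R outer (B *v v) (B *v v)
              + \<delta> *\<^sub>R mat 1 = Zs"
    by (simp add: Zs_def Ys_def y_def q_def Bv_def c_def)
  have q_pos: "0 < q" using assms(3) by (simp add: q_def y_def inner_commute)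
  have yv: "y \<bullet> v = q" by (simp add: q_def inner_commute)
  have symB: "transpose B = B" using assms(2) by (simp add: pd_mat_def sym_mat_def)
  have v0: "v \<noteq> 0" using q_pos by (auto simp: q_def)
  have c_pos: "0 < c" using assms(2) v0 by (simp add: pd_mat_def c_def Bv_def)
  have detB: "0 < det B" by (rule det_pd_pos[OF assms(2)])
  have invB: "invertible B" using detB by (simp add: invertible_det_nz)
  have HB: "H ** B = mat 1" "B ** H = mat 1" using matrix_inv_props[OF invB] by (auto simp: H_def)
  have symH: "transpose H = H"
  proof -
    have "transpose H = transpose H ** (B ** H)" by (simp add: HB)
    also have "\<dots> = transpose (B ** H) ** H" by (simp add: matrix_mul_assoc matrix_transpose_mul symB)
    also have "\<dots> = H" by (simp add: HB)
    finally show ?thesis .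
  qed
  have HBx: "H *v (B *v x) = x" for x by (simp add: matrix_vector_mul_assoc HB)
  have BHx: "B *v (H *v x) = x" for x by (simp add: matrix_vector_mul_assoc HB)
  have HBv: "H *v Bv = v" by (simp add: Bv_def HBx)
  have detHB: "det H * det B = 1" by (metis HB(1) det_mul det_I)
  have detH: "0 < det H"
  proof (rule ccontr)
    assume "\<not> 0 < det H"
    then have "det H * det B \<le> 0" using detB by (simp add: mult_nonpos_nonneg)
    then show False using detHB by simp
  qed
  have BvX: "v \<bullet> (B *v x) = Bv \<bullet> x" for x using sym_inner[OF symB] by (simp add: Bv_def)
  have Ysx: "Ys *v x = B *v x + ((1/q) * (y \<bullet> x)) *\<^sub>R y - ((1/c) * (Bv \<bullet> x)) *\<^sub>R Bv" for x
    by (simp add: Ys_def algebra_simps scaleR_mulv outer_mulv)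
  have Ysv: "Ys *v v = y"
    using q_pos c_pos by (simp add: Ysx yv Bv_def[symmetric] inner_commute[of Bv v] c_def[symmetric])
  have symYs: "transpose Ys = Ys"
    by (simp add: Ys_def transpose_add transpose_diff transpose_scaleR transpose_outer symB)
  have pdYs: "pd_mat Ys"
    unfolding pd_mat_def sym_mat_def
  proof (intro conjI allI impI)
    show "transpose Ys = Ys" by (rule symYs)
    fix x :: "real^'n" assume x0: "x \<noteq> 0"
    define t where "t = (Bv \<bullet> x) / c"
    define w where "w = x - t *\<^sub>R v"
    have Bw: "B *v w = B *v x - t *\<^sub>R Bv" by (simp add: w_def Bv_def algebra_simps)
    have "w \<bullet> (B *v w) = x \<bullet> (B *v x) - t * (x \<bullet> Bv) - t * (v \<bullet> (B *v x)) + t * t * (v \<bullet> Bv)"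
      unfolding Bw by (simp add: w_def algebra_simps inner_diff_left inner_diff_right)
    also have "\<dots> = x \<bullet> (B *v x) - (Bv \<bullet> x)^2 / c"
      using c_pos by (simp add: BvX inner_commute[of x Bv] c_def[symmetric] t_def field_simps power2_eq_square)
    finally have ww: "w \<bullet> (B *v w) = x \<bullet> (B *v x) - (Bv \<bullet> x)^2 / c" .
    have qx: "x \<bullet> (Ys *v x) = x \<bullet> (B *v x) - (Bv \<bullet> x)^2 / c + (y \<bullet> x)^2 / q"
      by (simp add: Ysx inner_add_right inner_diff_right inner_commute[of x y] inner_commute[of x Bv] power2_eq_square)
    show "0 < x \<bullet> (Ys *v x)"
    proof (cases "w = 0")
      case False
      then have "0 < w \<bullet> (B *v w)" using assms(2) by (simp add: pd_mat_def)
      moreover have "0 \<le> (y \<bullet> x)^2 / q" using q_pos by simp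
      ultimately show ?thesis using qx ww by linarith
    next
      case True
      then have xt: "x = t *\<^sub>R v" by (simp add: w_def)
      then have "t \<noteq> 0" using x0 by auto
      then have "y \<bullet> x \<noteq> 0" using xt yv q_pos by simp
      then have "0 < (y \<bullet> x)^2 / q" using q_pos by simp
      moreover have "w \<bullet> (B *v w) = 0" using True by simp
      ultimately show ?thesis using qx ww by linarith
    qed
  qed
  have detYs: "0 < det Ys" by (rule det_pd_pos[OF pdYs])
  have Hsz: "Hs *v z = H *v z - ((1/q) * (Hy \<bullet> z)) *\<^sub>R v - ((1/q) * (v \<bullet> z)) *\<^sub>R Hy + (kk * (v \<bullet> z)) *\<^sub>R v" for z
    by (simp add: Hs_def algebra_simps scaleR_mulv outer_mulv)
  have HsYs: "Hs ** Ys = mat 1"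
  proof -
    have "Hs *v (Ys *v x) = x" for x
    proof -
      have Hz: "H *v (Ys *v x) = x + ((1/q) * (y \<bullet> x)) *\<^sub>R Hy - ((1/c) * (Bv \<bullet> x)) *\<^sub>R v"
        by (simp add: Ysx HBx HBv Hy_def algebra_simps)
      have HyB: "Hy \<bullet> (B *v x') = y \<bullet> x'" for x'
        using sym_inner[OF symB, of Hy x'] by (simp add: Hy_def BHx)
      have HyBv: "Hy \<bullet> Bv = y \<bullet> v" using HyB[of v] by (simp add: Bv_def)
      have vz: "v \<bullet> (Ys *v x) = y \<bullet> x"
        using q_pos c_pos
        by (simp add: Ysx inner_add_right inner_diff_right BvX q_def[symmetric] c_def[symmetric])
      have Hyz: "Hy \<bullet> (Ys *v x) = y \<bullet> x + (1/q) * (y \<bullet> x) * h - (1/c) * (Bv \<bullet> x) * q"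
        by (simp add: Ysx inner_add_right inner_diff_right HyB HyBv yv h_def[symmetric])
      have "Hs *v (Ys *v x) = x + ((1/q) * (y \<bullet> x) - (1/q) * (y \<bullet> x)) *\<^sub>R Hy
          + (kk * (y \<bullet> x) - (1/c) * (Bv \<bullet> x) - (1/q) * (y \<bullet> x + (1/q) * (y \<bullet> x) * h - (1/c) * (Bv \<bullet> x) * q)) *\<^sub>R v"
        unfolding Hsz Hz vz Hyz by (simp add: algebra_simps)
      also have "kk * (y \<bullet> x) - (1/c) * (Bv \<bullet> x) - (1/q) * (y \<bullet> x + (1/q) * (y \<bullet> x) * h - (1/c) * (Bv \<bullet> x) * q) = 0"
        using q_pos c_pos by (simp add: kk_def field_simps power2_eq_square)
      finally show ?thesis by simp
    qed
    then show ?thesis by (simp add: matrix_eq matrix_vector_mul_assoc[symmetric])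
  qed
  have YsHs: "Ys ** Hs = mat 1" using HsYs matrix_left_right_inverse by blast
  have symHs: "transpose Hs = Hs"
    by (simp add: Hs_def transpose_add transpose_diff transpose_scaleR transpose_outer symH algebra_simps)
  have pdHs: "pd_mat Hs"
    unfolding pd_mat_def sym_mat_def
  proof (intro conjI allI impI)
    show "transpose Hs = Hs" by (rule symHs)
    fix x :: "real^'n" assume x0: "x \<noteq> 0"
    define u where "u = Hs *v x"
    have Yu: "Ys *v u = x" by (simp add: u_def matrix_vector_mul_assoc YsHs)
    have "u \<noteq> 0" using Yu x0 by auto
    then have "0 < u \<bullet> (Ys *v u)" using pdYs by (simp add: pd_mat_def)
    then show "0 < x \<bullet> (Hs *v x)" using Yu by (simp add: u_def inner_commute)
  qed
  have detHsYs: "det Hs * det Ys = 1" by (metis HsYs det_mul det_I)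
  have detHs: "0 < det Hs"
  proof (rule ccontr)
    assume "\<not> 0 < det Hs"
    then have "det Hs * det Ys \<le> 0" using detYs by (simp add: mult_nonpos_nonneg)
    then show False using detHsYs by simp
  qed
  have lnHs: "ln (det Hs) = - ln (det Ys)"
  proof -
    have "ln (det Hs * det Ys) = ln (det Hs) + ln (det Ys)" using detHs detYs by (simp add: ln_mult)
    then show ?thesis using detHsYs by simp
  qed
  define kap where "kap = - (1/q) * (Hy \<bullet> y) - (1/q) * (y \<bullet> Hy) + kk * (v \<bullet> y)"
  have trHs: "trace (Hs ** M) = trace (H ** M) + kap" if symM: "transpose M = M" and Mv: "M *v v = y" for M
  proof -
    have "Hs ** M = H ** M - (1/q) *\<^sub>R (outer v Hy ** M) - (1/q) *\<^sub>R (outer Hy v ** M) + kk *\<^sub>R (outer v v ** M)"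
      by (simp add: Hs_def mat_add_mult mat_diff_mult mat_scale_mult)
    then have "trace (Hs ** M) = trace (H ** M) - (1/q) * trace (outer v Hy ** M) - (1/q) * trace (outer Hy v ** M) + kk * trace (outer v v ** M)"
      by (simp add: trace_add trace_sub trace_scaleR)
    moreover have "trace (outer v Hy ** M) = Hy \<bullet> y" by (simp add: trace_outer_mult Mv)
    moreover have "trace (outer Hy v ** M) = y \<bullet> Hy"
      using sym_inner[OF symM, of v Hy] by (simp add: trace_outer_mult Mv)
    moreover have "trace (outer v v ** M) = v \<bullet> y" by (simp add: trace_outer_mult Mv)
    ultimately show ?thesis by (simp add: kap_def)
  qed
  have trHsYs: "trace (Hs ** Ys) = real CARD('n)" by (simp add: HsYs trace_I)
  have ZsYs: "Zs - \<delta> *\<^sub>R mat 1 = Ys" by (simp add: Zs_def)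
  have objZs: "sdp_obj B \<delta> Zs = trace (H ** Ys) - ln (det H) - ln (det Ys) - real CARD('n)"
    unfolding sdp_obj_def ZsYs H_def[symmetric] using detH detYs by (simp add: det_mul ln_mult)
  have diff: "sdp_obj B \<delta> W - sdp_obj B \<delta> Zs = trace (Hs ** (W - \<delta> *\<^sub>R mat 1)) - real CARD('n) - ln (det (Hs ** (W - \<delta> *\<^sub>R mat 1)))"
    and pdY: "pd_mat (W - \<delta> *\<^sub>R mat 1)"
    if W: "W \<in> sdp_feasible \<delta> v r" for W
  proof -
    define Y where "Y = W - \<delta> *\<^sub>R mat 1"
    have pdY: "pd_mat Y" "W *v v = r" using W by (simp_all add: sdp_feasible_def Y_def)
    have symY: "transpose Y = Y" using pdY by (simp add: pd_mat_def sym_mat_def)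
    have Yv: "Y *v v = y" using pdY(2) by (simp add: Y_def y_def algebra_simps scaleR_mulv)
    have detY: "0 < det Y" by (rule det_pd_pos[OF pdY(1)])
    have objW: "sdp_obj B \<delta> W = trace (H ** Y) - ln (det H) - ln (det Y) - real CARD('n)"
      unfolding sdp_obj_def Y_def[symmetric] H_def[symmetric] using detH detY by (simp add: det_mul ln_mult)
    have "trace (Hs ** Y) - trace (Hs ** Ys) = trace (H ** Y) - trace (H ** Ys)"
      using trHs[OF symY Yv] trHs[OF symYs Ysv] by simp
    moreover have "ln (det (Hs ** Y)) = ln (det Hs) + ln (det Y)"
      using detHs detY by (simp add: det_mul ln_mult)
    ultimately show "sdp_obj B \<delta> W - sdp_obj B \<delta> Zs = trace (Hs ** (W - \<delta> *\<^sub>R mat 1)) - real CARD('n) - ln (det (Hs ** (W - \<delta> *\<^sub>R mat 1)))"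
      unfolding Y_def[symmetric] objW objZs using lnHs trHsYs by simp
    show "pd_mat (W - \<delta> *\<^sub>R mat 1)" using pdY Y_def by simp
  qed
  have feas: "Zs \<in> sdp_feasible \<delta> v r"
    unfolding sdp_feasible_def
  proof (intro CollectI conjI)
    have symZs: "transpose Zs = Zs"
      by (simp add: Zs_def transpose_add transpose_scaleR symYs)
    then show "sym_mat Zs" by (simp add: sym_mat_def)
    show "Zs *v v = r" by (simp add: Zs_def algebra_simps scaleR_mulv Ysv y_def)
    show "psd_mat Zs"
      unfolding psd_mat_def
    proof (intro conjI allI)
      show "sym_mat Zs" using symZs by (simp add: sym_mat_def)
      fix x :: "real^'n"
      have "0 \<le> x \<bullet> (Ys *v x)"
        using pdYs unfolding pd_mat_def by (cases "x = 0") (auto intro: less_imp_le)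
      moreover have "0 \<le> \<delta> * (x \<bullet> x)" using assms(1) by simp
      ultimately show "0 \<le> x \<bullet> (Zs *v x)"
        by (simp add: Zs_def algebra_simps scaleR_mulv inner_add_right)
    qed
    show "pd_mat (Zs - \<delta> *\<^sub>R mat 1)" using ZsYs pdYs by simp
  qed
  show ?thesis
    unfolding goal_eq is_sdp_solution_def
  proof (intro conjI ballI impI)
    show "Zs \<in> sdp_feasible \<delta> v r" by (rule feas)
    fix W assume W: "W \<in> sdp_feasible \<delta> v r"
    have "ln (det (Hs ** (W - \<delta> *\<^sub>R mat 1))) \<le> trace (Hs ** (W - \<delta> *\<^sub>R mat 1)) - real CARD('n)"
      by (rule key_ineq(1)[OF pdHs pdY[OF W]])
    then show "sdp_obj B \<delta> Zs \<le> sdp_obj B \<delta> W" using diff[OF W] by simp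
  next
    fix W assume W: "W \<in> sdp_feasible \<delta> v r" and eq: "sdp_obj B \<delta> W = sdp_obj B \<delta> Zs"
    have "ln (det (Hs ** (W - \<delta> *\<^sub>R mat 1))) = trace (Hs ** (W - \<delta> *\<^sub>R mat 1)) - real CARD('n)"
      using diff[OF W] eq by simp
    then have HY: "Hs ** (W - \<delta> *\<^sub>R mat 1) = mat 1" by (rule key_ineq(2)[OF pdHs pdY[OF W]])
    have "Ys = Ys ** (Hs ** (W - \<delta> *\<^sub>R mat 1))" by (simp add: HY)
    also have "\<dots> = W - \<delta> *\<^sub>R mat 1" by (simp add: matrix_mul_assoc YsHs)
    finally show "W = Zs" by (simp add: Zs_def)
  qed
qed


end
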